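(* There exists $C=C(m)>1$, depending only on $m=\dim M$, such that for every $g\in\mathcal{M}^{\mathsf{G},\mathsf{T}}$, $$C^{-1}|A|_g^2\le|\hat A_g|_g\le C|A|_g^2,\qquad C^{-1}|A|_g^2\le|\check A_g|_g\le C|A|_g^2 .$$
   Context: $M=\mathsf{G}/\mathsf{H}$ ($m=\dim M$) is an almost-effective homogeneous space with $\mathsf{G},\mathsf{H}$ compact connected, $Q$ an $\mathrm{Ad}(\mathsf{G})$-invariant inner product on $\mathfrak{g}$, $\mathfrak{m}=\mathfrak{h}^{\perp_Q}$, $\mathfrak{m}_0=\{X\in\mathfrak{m}:[\mathfrak{h},X]=0\}$. Let $\mathsf{T}$ be a torus in the gauge group $N_{\mathsf{G}}(\mathsf{H})/\mathsf{H}$ with Lie algebra $\mathfrak{t}\subset\mathfrak{m}_0$ abelian, and $\mathfrak{m}=\mathfrak{t}+\mathfrak{b}$ $Q$-orthogonally ($\mathfrak{b}\cong T(\mathsf{G}/\mathsf{H}\mathsf{T})$). $\mathcal{M}^{\mathsf{G},\mathsf{T}}$ is the set of $\mathsf{G}$-invariant metrics $g=g_{\mathfrak{t}}+g_{\mathfrak{b}}$ with $\mathfrak{t}\perp_g\mathfrak{b}$ and $g_{\mathfrak{b}}$ $\mathrm{Ad}(\mathsf{H}\mathsf{T})$-invariant. The O'Neill tensor $A$ is given by $A_XY=\frac12[X,Y]_{\mathfrak{t}}$ (orthogonal projection to $\mathfrak{t}$) for $X,Y\in\mathfrak{b}$, $A_U=0$ for $U\in\mathfrak{t}$, and $A_XU\in\mathfrak{b}$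 with $g(A_XU,Y)=-g(A_XY,U)$. With $\{X_i\}$, $\{U_j\}$ $g$-orthonormal bases of $\mathfrak{b}$, $\mathfrak{t}$: $|A|_g^2=\sum_{i,j}|A_{X_i}X_j|_g^2$, $\hat A_g(U,V)=\sum_ig(A_{X_i}U,A_{X_i}V)$ on $\mathfrak{t}$, $\check A_g(X,Y)=\sum_ig(A_XX_i,A_YX_i)$ on $\mathfrak{b}$, with norms taken with respect to $g$. *)

theory Defs
  imports "HOL-Analysis.Analysis" "HOL-Library.Function_Algebras"
begin

text \<open>The Lie
  algebra g of G is realised as the coordinate space R^N, i.e. the functions
  vanishing at all indices >= N, and the Ad(G)-invariant inner product Q is the
  standard inner product on it (every finite-dimensional inner product space is
  isometric to such a model).  Using one concrete ambient type (instead of a type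
  variable) lets the constant C be quantified uniformly over all dimensions.\<close>

type_synonym vec = "nat \<Rightarrow> real"

definition vsc :: "real \<Rightarrow> vec \<Rightarrow> vec" where
  "vsc r x = (\<lambda>i. r * x i)"

definition vspan :: "vec set \<Rightarrow> vec set" where
  "vspan S = module.span vsc S"

definition vsubspace :: "vec set \<Rightarrow> bool" where
  "vsubspace S = module.subspace vsc S"

definition vdim :: "vec set \<Rightarrow> nat" where
  "vdim S = vector_space.dim vsc S"

definition gsp :: "nat \<Rightarrow> vec set" where
  "gsp N = {x. \<forall>i\<ge>N. x i = 0}"

definition Qip :: "nat \<Rightarrow> vec \<Rightarrow> vec \<Rightarrow> real" where
  "Qip N x y = (\<Sum>i<N. x i * y i)"

text \<open>br is a Lie bracket on g for which Q is ad-invariant (infinitesimal form of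
  Ad(G)-invariance, G connected); such a Lie algebra is of compact type.\<close>
definition compact_lie_alg :: "nat \<Rightarrow> (vec \<Rightarrow> vec \<Rightarrow> vec) \<Rightarrow> bool" where
  "compact_lie_alg N br \<longleftrightarrow>
     (\<forall>x\<in>gsp N. \<forall>y\<in>gsp N. br x y \<in> gsp N) \<and>
     (\<forall>a x y z. x \<in> gsp N \<longrightarrow> y \<in> gsp N \<longrightarrow> z \<in> gsp N \<longrightarrow>
        br (vsc a x + y) z = vsc a (br x z) + br y z) \<and>
     (\<forall>x\<in>gsp N. \<forall>y\<in>gsp N. br x y = - br y x) \<and>
     (\<forall>x\<in>gsp N. \<forall>y\<in>gsp N. \<forall>z\<in>gsp N.
        br x (br y z) + br y (br z x) + br z (br x y) = 0) \<and>
     (\<forall>x\<in>gsp N. \<forall>y\<in>gsp N. \<forall>z\<in>gsp N. Qip N (br x y) z = - Qip N y (br x z))"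

text \<open>h is the Lie algebra of H: a subalgebra of g; almost effectiveness of G/H
  means h contains no nonzero ideal of g.\<close>
definition isotropy_alg :: "nat \<Rightarrow> (vec \<Rightarrow> vec \<Rightarrow> vec) \<Rightarrow> vec set \<Rightarrow> bool" where
  "isotropy_alg N br H \<longleftrightarrow>
     vsubspace H \<and> H \<subseteq> gsp N \<and> (\<forall>x\<in>H. \<forall>y\<in>H. br x y \<in> H) \<and>
     (\<forall>I. vsubspace I \<and> I \<subseteq> H \<and> (\<forall>x\<in>gsp N. \<forall>y\<in>I. br x y \<in> I) \<longrightarrow> I = {0})"

definition msp :: "nat \<Rightarrow> vec set \<Rightarrow> vec set" where
  "msp N H = {x \<in> gsp N. \<forall>h\<in>H. Qip N x h = 0}"

definition m0sp :: "nat \<Rightarrow> (vec \<Rightarrow> vec \<Rightarrow> vec) \<Rightarrow> vec set \<Rightarrow> vec set" where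
  "m0sp N br H = {x \<in> msp N H. \<forall>h\<in>H. br h x = 0}"

definition bsp :: "nat \<Rightarrow> vec set \<Rightarrow> vec set \<Rightarrow> vec set" where
  "bsp N H tt = {x \<in> msp N H. \<forall>u\<in>tt. Qip N x u = 0}"

text \<open>t: Lie algebra of the torus T in the gauge group, an abelian subspace of m_0.\<close>
definition torus_alg :: "nat \<Rightarrow> (vec \<Rightarrow> vec \<Rightarrow> vec) \<Rightarrow> vec set \<Rightarrow> vec set \<Rightarrow> bool" where
  "torus_alg N br H tt \<longleftrightarrow>
     vsubspace tt \<and> tt \<subseteq> m0sp N br H \<and> (\<forall>u\<in>tt. \<forall>v\<in>tt. br u v = 0)"

text \<open>g \<in> M^{G,T}: an Ad(H)-invariant inner product on m (= G-invariant metric on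
  G/H), with t \<perp>_g b and g_b Ad(HT)-invariant (infinitesimally: ad(h + t)).\<close>
definition GT_metric ::
  "nat \<Rightarrow> (vec \<Rightarrow> vec \<Rightarrow> vec) \<Rightarrow> vec set \<Rightarrow> vec set \<Rightarrow> (vec \<Rightarrow> vec \<Rightarrow> real) \<Rightarrow> bool" where
  "GT_metric N br H tt gm \<longleftrightarrow>
     (\<forall>a x y z. x \<in> msp N H \<longrightarrow> y \<in> msp N H \<longrightarrow> z \<in> msp N H \<longrightarrow>
        gm (vsc a x + y) z = a * gm x z + gm y z) \<and>
     (\<forall>x\<in>msp N H. \<forall>y\<in>msp N H. gm x y = gm y x) \<and>
     (\<forall>x\<in>msp N H. x \<noteq> 0 \<longrightarrow> gm x x > 0) \<and>
     (\<forall>h\<in>H. \<forall>x\<in>msp N H. \<forall>y\<in>msp N H. gm (br h x) y + gm x (br h y) = 0) \<and>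
     (\<forall>u\<in>tt. \<forall>x\<in>bsp N H tt. gm u x = 0) \<and>
     (\<forall>z\<in>H \<union> tt. \<forall>x\<in>bsp N H tt. \<forall>y\<in>bsp N H tt.
        gm (br z x) y + gm x (br z y) = 0)"

definition tproj :: "nat \<Rightarrow> vec set \<Rightarrow> vec \<Rightarrow> vec" where
  "tproj N tt v = (THE p. p \<in> tt \<and> (\<forall>u\<in>tt. Qip N (v - p) u = 0))"

text \<open>O'Neill tensor: A_X Y = 1/2 [X,Y]_t for X, Y in b.\<close>
definition Abb :: "nat \<Rightarrow> (vec \<Rightarrow> vec \<Rightarrow> vec) \<Rightarrow> vec set \<Rightarrow> vec \<Rightarrow> vec \<Rightarrow> vec" where
  "Abb N br tt X Y = vsc (1/2) (tproj N tt (br X Y))"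

definition Abt :: "nat \<Rightarrow> (vec \<Rightarrow> vec \<Rightarrow> vec) \<Rightarrow> vec set \<Rightarrow> vec set \<Rightarrow> (vec \<Rightarrow> vec \<Rightarrow> real)
                   \<Rightarrow> vec \<Rightarrow> vec \<Rightarrow> vec" where
  "Abt N br H tt gm X U = (THE w. w \<in> bsp N H tt \<and>
      (\<forall>Y\<in>bsp N H tt. gm w Y = - gm (Abb N br tt X Y) U))"

definition onb :: "(vec \<Rightarrow> vec \<Rightarrow> real) \<Rightarrow> vec set \<Rightarrow> vec set \<Rightarrow> bool" where
  "onb gm S B \<longleftrightarrow> finite B \<and> B \<subseteq> S \<and> S \<subseteq> vspan B \<and>
     (\<forall>x\<in>B. \<forall>y\<in>B. gm x y = (if x = y then 1 else 0))"

definition normA_sq :: "nat \<Rightarrow> (vec \<Rightarrow> vec \<Rightarrow> vec) \<Rightarrow> vec set \<Rightarrow> (vec \<Rightarrow> vec \<Rightarrow> real)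
                        \<Rightarrow> vec set \<Rightarrow> real" where
  "normA_sq N br tt gm XB =
     (\<Sum>x\<in>XB. \<Sum>y\<in>XB. gm (Abb N br tt x y) (Abb N br tt x y))"

definition hatA :: "nat \<Rightarrow> (vec \<Rightarrow> vec \<Rightarrow> vec) \<Rightarrow> vec set \<Rightarrow> vec set \<Rightarrow> (vec \<Rightarrow> vec \<Rightarrow> real)
                    \<Rightarrow> vec set \<Rightarrow> vec \<Rightarrow> vec \<Rightarrow> real" where
  "hatA N br H tt gm XB U V = (\<Sum>x\<in>XB. gm (Abt N br H tt gm x U) (Abt N br H tt gm x V))"

definition checkA :: "nat \<Rightarrow> (vec \<Rightarrow> vec \<Rightarrow> vec) \<Rightarrow> vec set \<Rightarrow> (vec \<Rightarrow> vec \<Rightarrow> real)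
                      \<Rightarrow> vec set \<Rightarrow> vec \<Rightarrow> vec \<Rightarrow> real" where
  "checkA N br tt gm XB X Y = (\<Sum>x\<in>XB. gm (Abb N br tt X x) (Abb N br tt Y x))"

definition form_norm :: "vec set \<Rightarrow> (vec \<Rightarrow> vec \<Rightarrow> real) \<Rightarrow> real" where
  "form_norm B F = sqrt (\<Sum>x\<in>B. \<Sum>y\<in>B. (F x y)\<^sup>2)"

end

theory Submission
  imports Defs
begin

lemma sum_fun_apply: "(sum f A) i = (\<Sum>a\<in>A. f a i)"
  by (induction A rule: infinite_finite_induct) auto

lemma vsc_apply: "vsc a x i = a * x i" by (simp add: vsc_def)

lemmas fapp = vsc_apply zero_fun_apply plus_fun_apply minus_apply uminus_apply sum_fun_apply
declare zero_fun_apply[simp del] plus_fun_apply[simp del] minus_apply[simp del] uminus_apply[simp del]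

interpretation V: vector_space vsc
  by unfold_locales (auto simp: vsc_def fun_eq_iff algebra_simps fapp)


lemma Qip_add1: "Qip N (x + y) z = Qip N x z + Qip N y z"
  by (simp add: fapp Qip_def sum.distrib algebra_simps)
lemma Qip_add2: "Qip N z (x + y) = Qip N z x + Qip N z y"
  by (simp add: fapp Qip_def sum.distrib algebra_simps)
lemma Qip_diff1: "Qip N (x - y) z = Qip N x z - Qip N y z"
  by (simp add: fapp Qip_def sum_subtractf algebra_simps)
lemma Qip_diff2: "Qip N z (x - y) = Qip N z x - Qip N z y"
  by (simp add: fapp Qip_def sum_subtractf algebra_simps)
lemma Qip_scale1: "Qip N (vsc a x) z = a * Qip N x z"
  by (simp add: fapp Qip_def sum_distrib_left algebra_simps)
lemma Qip_scale2: "Qip N z (vsc a x) = a * Qip N z x"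
  by (simp add: fapp Qip_def sum_distrib_left algebra_simps)
lemma Qip_zero1[simp]: "Qip N 0 z = 0" by (simp add: Qip_def fapp)
lemma Qip_zero2[simp]: "Qip N z 0 = 0" by (simp add: Qip_def fapp)
lemma Qip_sym: "Qip N x y = Qip N y x" by (simp add: Qip_def mult.commute)

lemma Qip_self_zero:
  assumes "x \<in> gsp N" "Qip N x x = 0" shows "x = 0"
proof
  fix i show "x i = 0 i"
  proof (cases "i < N")
    case True
    have "\<forall>j\<in>{..<N}. x j * x j = 0"
      using assms(2) unfolding Qip_def by (subst sum_nonneg_eq_0_iff[symmetric]) auto
    with True show ?thesis by (auto simp: fapp)
  next
    case False then show ?thesis using assms(1) by (auto simp: gsp_def fapp)
  qed
qed

lemma gsp_subspace: "V.subspace (gsp N)"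
  unfolding V.subspace_def gsp_def by (auto simp: fapp)

lemma msp_subspace: "V.subspace (msp N H)"
  unfolding V.subspace_def msp_def gsp_def
  by (auto simp: Qip_add1 Qip_scale1 fapp)

lemma bsp_subspace: "V.subspace (bsp N H tt)"
  using msp_subspace[of N H] unfolding V.subspace_def bsp_def
  by (auto simp: Qip_add1 Qip_scale1 fapp)

lemma bsp_msp: "bsp N H tt \<subseteq> msp N H" by (auto simp: bsp_def)
lemma msp_gsp: "msp N H \<subseteq> gsp N" by (auto simp: msp_def)

lemma gsp_span: "gsp N \<subseteq> V.span ((\<lambda>i. \<lambda>j. if j = i then 1 else 0) ` {..<N})"
proof
  fix x assume x: "x \<in> gsp N"
  have "x = (\<Sum>i<N. vsc (x i) (\<lambda>j. if j = i then 1 else 0))"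
  proof
    fix j
    show "x j = (\<Sum>i<N. vsc (x i) (\<lambda>j. if j = i then 1 else (0::real))) j"
      using x by (cases "j < N") (auto simp: gsp_def fapp if_distrib[of "(*) _"] sum.delta cong: if_cong)
  qed
  then show "x \<in> V.span ((\<lambda>i. \<lambda>j. if j = i then 1 else 0) ` {..<N})"
    by (metis (no_types, lifting) V.span_base V.span_scale V.span_sum image_eqI)
qed

lemma gram_upper:
  fixes c :: "'i \<Rightarrow> 'j \<Rightarrow> real"
  assumes "finite J"
  shows "sqrt (\<Sum>j\<in>J. \<Sum>j'\<in>J. (\<Sum>i\<in>I. c i j * c i j')\<^sup>2) \<le> (\<Sum>i\<in>I. \<Sum>j\<in>J. (c i j)\<^sup>2)"
proof -
  define D where "D j = (\<Sum>i\<in>I. (c i j)\<^sup>2)" for j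
  have T: "(\<Sum>i\<in>I. \<Sum>j\<in>J. (c i j)\<^sup>2) = (\<Sum>j\<in>J. D j)"
    unfolding D_def by (rule sum.swap)
  have D0: "0 \<le> D j" for j unfolding D_def by (simp add: sum_nonneg)
  have "(\<Sum>j\<in>J. \<Sum>j'\<in>J. (\<Sum>i\<in>I. c i j * c i j')\<^sup>2) \<le> (\<Sum>j\<in>J. \<Sum>j'\<in>J. D j * D j')"
    by (intro sum_mono) (simp add: D_def Cauchy_Schwarz_ineq_sum)
  also have "\<dots> = (\<Sum>j\<in>J. D j)\<^sup>2"
    by (simp add: power2_eq_square sum_product)
  finally show ?thesis unfolding T
    by (simp add: D0 real_le_lsqrt sum_nonneg real_sqrt_le_iff)
qed

lemma gram_lower:
  fixes c :: "'i \<Rightarrow> 'j \<Rightarrow> real"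
  assumes "finite J"
  shows "(\<Sum>i\<in>I. \<Sum>j\<in>J. (c i j)\<^sup>2) \<le> sqrt (card J) * sqrt (\<Sum>j\<in>J. \<Sum>j'\<in>J. (\<Sum>i\<in>I. c i j * c i j')\<^sup>2)"
proof -
  define D where "D j = (\<Sum>i\<in>I. (c i j)\<^sup>2)" for j
  have T: "(\<Sum>i\<in>I. \<Sum>j\<in>J. (c i j)\<^sup>2) = (\<Sum>j\<in>J. D j)"
    unfolding D_def by (rule sum.swap)
  have D0: "0 \<le> D j" for j unfolding D_def by (simp add: sum_nonneg)
  have h1: "(\<Sum>j\<in>J. D j)\<^sup>2 \<le> (\<Sum>j\<in>J. (D j)\<^sup>2) * card J"
    by (rule sum_squared_le_sum_of_squares)
  have h2: "(\<Sum>j\<in>J. (D j)\<^sup>2) \<le> (\<Sum>j\<in>J. \<Sum>j'\<in>J. (\<Sum>i\<in>I. c i j * c i j')\<^sup>2)"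
  proof (intro sum_mono)
    fix j assume j: "j \<in> J"
    have "(D j)\<^sup>2 = (\<Sum>i\<in>I. c i j * c i j)\<^sup>2" by (simp add: D_def power2_eq_square)
    also have "\<dots> \<le> (\<Sum>j'\<in>J. (\<Sum>i\<in>I. c i j * c i j')\<^sup>2)"
      using j assms by (intro member_le_sum) auto
    finally show "(D j)\<^sup>2 \<le> (\<Sum>j'\<in>J. (\<Sum>i\<in>I. c i j * c i j')\<^sup>2)" .
  qed
  have "(\<Sum>j\<in>J. D j)\<^sup>2 \<le> card J * (\<Sum>j\<in>J. \<Sum>j'\<in>J. (\<Sum>i\<in>I. c i j * c i j')\<^sup>2)"
    using h1 mult_right_mono[OF h2, of "real (card J)"] by (simp add: mult.commute)
  then have "sqrt ((\<Sum>j\<in>J. D j)\<^sup>2) \<le> sqrt (card J * (\<Sum>j\<in>J. \<Sum>j'\<in>J. (\<Sum>i\<in>I. c i j * c i j')\<^sup>2))"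
    using real_sqrt_le_mono by blast
  then show ?thesis unfolding T by (simp add: D0 sum_nonneg real_sqrt_mult)
qed

lemma Qip_orth_span:
  assumes "\<forall>s\<in>S. Qip N w s = 0" "z \<in> V.span S" shows "Qip N w z = 0"
  using assms(2)
proof (induction rule: V.span_induct_alt)
  case base then show ?case by simp
next
  case (step c x y) then show ?case using assms(1) by (simp add: Qip_add2 Qip_scale2)
qed

lemma span_gsp: "S \<subseteq> gsp N \<Longrightarrow> V.span S \<subseteq> gsp N"
  using V.span_minimal gsp_subspace by blast

lemma proj_exists:
  assumes "finite S" "S \<subseteq> gsp N"
  shows "v \<in> gsp N \<Longrightarrow> \<exists>p\<in>V.span S. \<forall>s\<in>S. Qip N (v - p) s = 0"
  using assms
proof (induction S arbitrary: v rule: finite_induct)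
  case empty then show ?case using V.span_zero by blast
next
  case (insert a S)
  have aG: "a \<in> gsp N" and SG: "S \<subseteq> gsp N" using insert by auto
  obtain p' where p': "p' \<in> V.span S" "\<forall>s\<in>S. Qip N (v - p') s = 0"
    using insert.IH[OF insert.prems(1) SG] by blast
  obtain q where q: "q \<in> V.span S" "\<forall>s\<in>S. Qip N (a - q) s = 0"
    using insert.IH[OF aG SG] by blast
  have sub: "V.span S \<subseteq> V.span (insert a S)" by (rule V.span_mono) auto
  have aI: "a \<in> V.span (insert a S)" by (rule V.span_base) auto
  have qG: "q \<in> gsp N" using q(1) span_gsp[OF SG] by blast
  have p'q: "Qip N (v - p') q = 0" using Qip_orth_span[OF p'(2) q(1)] .
  define a' where "a' = a - q"
  have a'S: "\<forall>s\<in>S. Qip N a' s = 0" using q(2) by (simp add: a'_def)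
  have a'q: "Qip N a' q = 0" using Qip_orth_span[OF a'S q(1)] .
  show ?case
  proof (cases "Qip N a' a' = 0")
    case True
    have "a' \<in> gsp N" unfolding a'_def using aG qG gsp_subspace V.subspace_diff by blast
    then have "a' = 0" using Qip_self_zero True by blast
    then have "a = q" by (simp add: a'_def)
    then show ?thesis using p' p'q sub by (intro bexI[of _ p']) auto
  next
    case False
    define c where "c = Qip N (v - p') a' / Qip N a' a'"
    define p where "p = p' + vsc c a'"
    have pI: "p \<in> V.span (insert a S)"
      unfolding p_def a'_def using sub p'(1) q(1) aI
      by (intro V.span_add V.span_scale V.span_diff) auto
    have e: "v - p = (v - p') - vsc c a'" by (simp add: p_def)
    have s1: "\<forall>s\<in>S. Qip N (v - p) s = 0" unfolding e using p'(2) a'S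
      by (simp add: Qip_diff1 Qip_scale1)
    have "Qip N (v - p) a' = 0" unfolding e using False
      by (simp add: Qip_diff1 Qip_scale1 c_def)
    moreover have "Qip N (v - p) q = 0" unfolding e using p'q a'q
      by (simp add: Qip_diff1 Qip_scale1)
    moreover have "a = a' + q" by (simp add: a'_def)
    ultimately have "Qip N (v - p) a = 0" by (simp add: Qip_add2)
    then show ?thesis using s1 pI by (intro bexI[of _ p]) auto
  qed
qed

locale setting =
  fixes N br H tt gm XB UB
  assumes CL: "compact_lie_alg N br" and ISO: "isotropy_alg N br H"
    and TOR: "torus_alg N br H tt" and GT: "GT_metric N br H tt gm"
    and OX: "onb gm (bsp N H tt) XB" and OU: "onb gm tt UB"
begin

abbreviation "M \<equiv> msp N H"
abbreviation "B \<equiv> bsp N H tt"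

lemma tt_M: "tt \<subseteq> M" using TOR by (auto simp: torus_alg_def m0sp_def)
lemma tt_sub: "V.subspace tt" using TOR by (simp add: torus_alg_def vsubspace_def)
lemma tt_G: "tt \<subseteq> gsp N" using tt_M msp_gsp by blast
lemma B_G: "B \<subseteq> gsp N" using bsp_msp msp_gsp by blast

lemma gm_lin: "x \<in> M \<Longrightarrow> y \<in> M \<Longrightarrow> z \<in> M \<Longrightarrow> gm (vsc a x + y) z = a * gm x z + gm y z"
  using GT by (simp add: GT_metric_def)
lemma gm_sym: "x \<in> M \<Longrightarrow> y \<in> M \<Longrightarrow> gm x y = gm y x"
  using GT by (simp add: GT_metric_def)
lemma gm_pos: "x \<in> M \<Longrightarrow> x \<noteq> 0 \<Longrightarrow> gm x x > 0"
  using GT by (simp add: GT_metric_def)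

lemma M0: "0 \<in> M" using msp_subspace V.subspace_0 by blast

lemma gm_zero1: "z \<in> M \<Longrightarrow> gm 0 z = 0"
  using gm_lin[OF M0 M0, of z "-1"] by (simp add: V.scale_zero_right)

lemma gm_add1: "x \<in> M \<Longrightarrow> y \<in> M \<Longrightarrow> z \<in> M \<Longrightarrow> gm (x + y) z = gm x z + gm y z"
  using gm_lin[of x y z 1] by simp
lemma gm_scale1: "x \<in> M \<Longrightarrow> z \<in> M \<Longrightarrow> gm (vsc a x) z = a * gm x z"
  using gm_lin[OF _ M0, of x z a] gm_zero1 by simp
lemma gm_diff1: "x \<in> M \<Longrightarrow> y \<in> M \<Longrightarrow> z \<in> M \<Longrightarrow> gm (x - y) z = gm x z - gm y z"
proof -
  assume a: "x \<in> M" "y \<in> M" "z \<in> M"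
  have "x - y = vsc (-1) y + x" by (simp add: V.scale_minus_left)
  then show ?thesis using gm_lin[OF a(2) a(1) a(3), of "-1"] by simp
qed

lemma gm_sum1: "finite A \<Longrightarrow> (\<And>a. a \<in> A \<Longrightarrow> f a \<in> M) \<Longrightarrow> z \<in> M \<Longrightarrow>
   gm (sum f A) z = (\<Sum>a\<in>A. gm (f a) z)"
proof (induction A rule: finite_induct)
  case empty then show ?case using gm_zero1 by simp
next
  case (insert a A)
  have "sum f A \<in> M" using insert by (intro V.subspace_sum[OF msp_subspace]) auto
  then show ?case using insert by (simp add: gm_add1)
qed


context
  fixes S Bs assumes SM: "S \<subseteq> M" and Ssub: "V.subspace S" and O: "onb gm S Bs"
begin

lemma Bs_fin: "finite Bs" using O by (simp add: onb_def)
lemma Bs_S: "Bs \<subseteq> S" using O by (simp add: onb_def)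
lemma Bs_M: "Bs \<subseteq> M" using Bs_S SM by blast
lemma Bs_span: "S \<subseteq> V.span Bs" using O by (simp add: onb_def vspan_def)
lemma Bs_orth: "x \<in> Bs \<Longrightarrow> y \<in> Bs \<Longrightarrow> gm x y = (if x = y then 1 else 0)"
  using O by (simp add: onb_def)

lemma gm_comb: "b' \<in> Bs \<Longrightarrow> gm (\<Sum>b\<in>Bs. vsc (u b) b) b' = u b'"
proof -
  assume b': "b' \<in> Bs"
  have "gm (\<Sum>b\<in>Bs. vsc (u b) b) b' = (\<Sum>b\<in>Bs. gm (vsc (u b) b) b')"
    using Bs_fin Bs_M b' msp_subspace by (intro gm_sum1) (auto intro: V.subspace_scale)
  also have "\<dots> = (\<Sum>b\<in>Bs. u b * (if b = b' then 1 else 0))"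
  proof (intro sum.cong refl)
    fix b assume b: "b \<in> Bs"
    then have "b \<in> M" using Bs_M by blast
    then show "gm (vsc (u b) b) b' = u b * (if b = b' then 1 else 0)"
      using b b' Bs_M by (simp add: gm_scale1 Bs_orth subsetD)
  qed
  also have "\<dots> = u b'" using Bs_fin b' by (simp add: if_distrib cong: if_cong)
  finally show ?thesis .
qed

lemma onb_expand: "v \<in> S \<Longrightarrow> v = (\<Sum>b\<in>Bs. vsc (gm v b) b)"
proof -
  assume v: "v \<in> S"
  then have "v \<in> V.span Bs" using Bs_span by blast
  then obtain u where u: "v = (\<Sum>b\<in>Bs. vsc (u b) b)"
    using V.span_finite[OF Bs_fin] by auto
  have "gm v b = u b" if "b \<in> Bs" for b using gm_comb[OF that] u by simp
  then show ?thesis using u by (auto intro: sum.cong)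
qed

lemma parseval: "v \<in> S \<Longrightarrow> w \<in> S \<Longrightarrow> gm v w = (\<Sum>b\<in>Bs. gm v b * gm w b)"
proof -
  assume v: "v \<in> S" and w: "w \<in> S"
  have "gm v w = gm (\<Sum>b\<in>Bs. vsc (gm v b) b) w" using onb_expand[OF v] by simp
  also have "\<dots> = (\<Sum>b\<in>Bs. gm (vsc (gm v b) b) w)"
    using Bs_fin Bs_M w SM msp_subspace by (intro gm_sum1) (auto intro: V.subspace_scale)
  also have "\<dots> = (\<Sum>b\<in>Bs. gm v b * gm w b)"
  proof (intro sum.cong refl)
    fix b assume b: "b \<in> Bs"
    then have "b \<in> M" using Bs_M by blast
    moreover have "w \<in> M" using w SM by blast
    ultimately show "gm (vsc (gm v b) b) w = gm v b * gm w b"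
      by (simp add: gm_scale1 gm_sym)
  qed
  finally show ?thesis .
qed

lemma Bs_indep: "V.independent Bs"
proof (rule V.independent_if_scalars_zero[OF Bs_fin])
  fix f x assume s: "(\<Sum>x\<in>Bs. vsc (f x) x) = 0" and x: "x \<in> Bs"
  have "f x = gm (\<Sum>x\<in>Bs. vsc (f x) x) x" using gm_comb[OF x] by simp
  also have "\<dots> = 0" using s gm_zero1 x Bs_M by auto
  finally show "f x = 0" .
qed

lemma Bs_card: "card Bs \<le> vdim M"
proof -
  obtain A where A: "A \<subseteq> M" "V.independent A" "M \<subseteq> V.span A"
    using V.maximal_independent_subset by blast
  let ?W = "(\<lambda>i. \<lambda>j. if j = i then 1 else 0) ` {..<N}"
  have "A \<subseteq> V.span ?W" using A(1) msp_gsp gsp_span by blast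
  then have fA: "finite A" using V.independent_span_bound[OF _ A(2)] by blast
  have cA: "card A = vdim M" unfolding vdim_def using V.basis_card_eq_dim[OF A(1) A(3) A(2)] .
  have "Bs \<subseteq> V.span A" using Bs_M A(3) by blast
  then have "card Bs \<le> card A" using V.independent_span_bound[OF fA Bs_indep] by blast
  then show ?thesis using cA by simp
qed

end

end

context setting begin

lemma tt_span: "V.span UB = tt"
proof
  show "V.span UB \<subseteq> tt" using V.span_minimal[OF _ tt_sub] OU by (auto simp: onb_def)
  show "tt \<subseteq> V.span UB" using OU by (auto simp: onb_def vspan_def)
qed

lemma UB_fin: "finite UB" using OU by (simp add: onb_def)
lemma UB_tt: "UB \<subseteq> tt" using OU by (simp add: onb_def)

lemma tproj_uniq:
  assumes "p1 \<in> tt" "\<forall>u\<in>tt. Qip N (v - p1) u = 0" "p2 \<in> tt" "\<forall>u\<in>tt. Qip N (v - p2) u = 0"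
  shows "p1 = p2"
proof -
  have d: "p1 - p2 \<in> tt" using assms tt_sub V.subspace_diff by blast
  have "p1 - p2 = (v - p2) - (v - p1)" by simp
  then have "Qip N (p1 - p2) (p1 - p2) = 0"
    using assms d by (metis Qip_diff1 diff_self)
  moreover have "p1 - p2 \<in> gsp N" using d tt_G by blast
  ultimately show ?thesis using Qip_self_zero by fastforce
qed

lemma tproj_ex: "v \<in> gsp N \<Longrightarrow> \<exists>p\<in>tt. \<forall>u\<in>tt. Qip N (v - p) u = 0"
proof -
  assume v: "v \<in> gsp N"
  obtain p where p: "p \<in> V.span UB" "\<forall>s\<in>UB. Qip N (v - p) s = 0"
    using proj_exists[OF UB_fin _ v] UB_tt tt_G by blast
  show ?thesis using p tt_span Qip_orth_span[OF p(2)] by blast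
qed

lemma tproj_eq: "p \<in> tt \<Longrightarrow> \<forall>u\<in>tt. Qip N (v - p) u = 0 \<Longrightarrow> tproj N tt v = p"
  unfolding tproj_def by (rule the_equality) (auto intro: tproj_uniq)

lemma tproj_prop: "v \<in> gsp N \<Longrightarrow> tproj N tt v \<in> tt \<and> (\<forall>u\<in>tt. Qip N (v - tproj N tt v) u = 0)"
  using tproj_ex tproj_eq by metis

lemma tproj_lin:
  assumes "v \<in> gsp N" "w \<in> gsp N"
  shows "tproj N tt (vsc a v + w) = vsc a (tproj N tt v) + tproj N tt w"
proof (rule tproj_eq)
  let ?p = "tproj N tt v" and ?q = "tproj N tt w"
  have p: "?p \<in> tt" "\<forall>u\<in>tt. Qip N (v - ?p) u = 0" using tproj_prop[OF assms(1)] by auto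
  have q: "?q \<in> tt" "\<forall>u\<in>tt. Qip N (w - ?q) u = 0" using tproj_prop[OF assms(2)] by auto
  show "vsc a ?p + ?q \<in> tt" using p q tt_sub by (intro V.subspace_add V.subspace_scale) auto
  have e: "vsc a v + w - (vsc a ?p + ?q) = vsc a (v - ?p) + (w - ?q)"
    by (simp add: V.scale_right_diff_distrib)
  show "\<forall>u\<in>tt. Qip N (vsc a v + w - (vsc a ?p + ?q)) u = 0"
    unfolding e using p q by (simp add: Qip_add1 Qip_scale1)
qed

lemma br_G: "x \<in> gsp N \<Longrightarrow> y \<in> gsp N \<Longrightarrow> br x y \<in> gsp N"
  using CL unfolding compact_lie_alg_def by blast

lemma br_anti: "x \<in> gsp N \<Longrightarrow> y \<in> gsp N \<Longrightarrow> br x y = - br y x"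
  using CL unfolding compact_lie_alg_def by blast

lemma br_lin1: "x \<in> gsp N \<Longrightarrow> y \<in> gsp N \<Longrightarrow> z \<in> gsp N \<Longrightarrow>
  br (vsc a x + y) z = vsc a (br x z) + br y z"
  using CL unfolding compact_lie_alg_def by blast

lemma br_lin2:
  assumes "x \<in> gsp N" "y \<in> gsp N" "z \<in> gsp N"
  shows "br x (vsc a y + z) = vsc a (br x y) + br x z"
proof -
  have yz: "vsc a y + z \<in> gsp N" using assms gsp_subspace by (intro V.subspace_add V.subspace_scale) auto
  note anti = br_anti
  have lin: "br (vsc a y + z) x = vsc a (br y x) + br z x"
    using br_lin1 assms by blast
  have "br x (vsc a y + z) = - br (vsc a y + z) x" using anti[OF assms(1) yz] .
  also have "\<dots> = - (vsc a (br y x) + br z x)" using lin by simp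
  also have "\<dots> = vsc a (- br y x) + (- br z x)" by (simp add: V.scale_minus_right)
  also have "\<dots> = vsc a (br x y) + br x z" using anti[OF assms(1,2)] anti[OF assms(1,3)] by simp
  finally show ?thesis .
qed

lemma Abb_tt: "x \<in> gsp N \<Longrightarrow> y \<in> gsp N \<Longrightarrow> Abb N br tt x y \<in> tt"
  unfolding Abb_def using tproj_prop br_G tt_sub V.subspace_scale by blast

lemma Abb_M: "x \<in> gsp N \<Longrightarrow> y \<in> gsp N \<Longrightarrow> Abb N br tt x y \<in> M"
  using Abb_tt tt_M by blast

lemma Abb_lin2:
  assumes "x \<in> gsp N" "y \<in> gsp N" "z \<in> gsp N"
  shows "Abb N br tt x (vsc a y + z) = vsc a (Abb N br tt x y) + Abb N br tt x z"
  unfolding Abb_def br_lin2[OF assms] tproj_lin[OF br_G[OF assms(1,2)] br_G[OF assms(1,3)]]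
  by (simp add: V.scale_right_distrib)

lemma Abb_zero: "x \<in> gsp N \<Longrightarrow> Abb N br tt x 0 = 0"
proof -
  assume x: "x \<in> gsp N"
  have z: "(0::vec) \<in> gsp N" using gsp_subspace V.subspace_0 by blast
  have "Abb N br tt x (vsc (-1) 0 + 0) = vsc (-1) (Abb N br tt x 0) + Abb N br tt x 0"
    by (rule Abb_lin2[OF x z z])
  then show ?thesis by (simp add: V.scale_minus_left)
qed

lemma Abb_sum:
  assumes x: "x \<in> gsp N"
  shows "finite A \<Longrightarrow> A \<subseteq> gsp N \<Longrightarrow>
    Abb N br tt x (\<Sum>y\<in>A. vsc (c y) y) = (\<Sum>y\<in>A. vsc (c y) (Abb N br tt x y))"
proof (induction A rule: finite_induct)
  case empty then show ?case using Abb_zero[OF x] by simp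
next
  case (insert a A)
  have "(\<Sum>y\<in>A. vsc (c y) y) \<in> gsp N" using insert gsp_subspace
    by (intro V.subspace_sum) (auto intro: V.subspace_scale)
  then show ?case using insert Abb_lin2[OF x, of a "\<Sum>y\<in>A. vsc (c y) y" "c a"] by simp
qed

end

context setting begin

lemma XB_fin: "finite XB" using OX by (simp add: onb_def)
lemma XB_B: "XB \<subseteq> B" using OX by (simp add: onb_def)
lemma XB_G: "XB \<subseteq> gsp N" using XB_B B_G by blast
lemma B_M: "B \<subseteq> M" by (rule bsp_msp)
lemma XB_Mm: "y \<in> XB \<Longrightarrow> y \<in> M" using XB_B B_M by blast
lemma XB_Gm: "y \<in> XB \<Longrightarrow> y \<in> gsp N" using XB_G by blast
lemma scaleM: "y \<in> M \<Longrightarrow> vsc a y \<in> M" using V.subspace_scale[OF msp_subspace] by blast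

lemmas onbB = onb_expand[OF bsp_msp bsp_subspace OX] parseval[OF bsp_msp bsp_subspace OX]
lemmas onbT = onb_expand[OF tt_M tt_sub OU] parseval[OF tt_M tt_sub OU]

lemma Abt_prop:
  assumes x: "x \<in> gsp N" and U: "U \<in> tt"
  shows "Abt N br H tt gm x U \<in> B \<and> (\<forall>Y\<in>B. gm (Abt N br H tt gm x U) Y = - gm (Abb N br tt x Y) U)"
proof -
  let ?P = "\<lambda>w. w \<in> B \<and> (\<forall>Y\<in>B. gm w Y = - gm (Abb N br tt x Y) U)"
  have UM: "U \<in> M" using U tt_M by blast
  define cf where "cf y = - gm (Abb N br tt x y) U" for y
  define w where "w = (\<Sum>y\<in>XB. vsc (cf y) y)"
  have wB: "w \<in> B" unfolding w_def
  proof (rule V.subspace_sum[OF bsp_subspace])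
    fix y assume "y \<in> XB"
    then have "y \<in> B" using XB_B by blast
    then show "vsc (cf y) y \<in> B" using V.subspace_scale[OF bsp_subspace] by blast
  qed
  have "gm w Y = - gm (Abb N br tt x Y) U" if Y: "Y \<in> B" for Y
  proof -
    have YM: "Y \<in> M" using Y B_M by blast
    have "gm w Y = (\<Sum>y\<in>XB. gm (vsc (cf y) y) Y)"
      unfolding w_def using XB_fin YM
      by (intro gm_sum1) (auto intro: scaleM XB_Mm)
    also have "\<dots> = (\<Sum>y\<in>XB. cf y * gm Y y)"
    proof (intro sum.cong refl)
      fix y assume "y \<in> XB"
      then have "y \<in> M" using XB_B B_M by blast
      then show "gm (vsc (cf y) y) Y = cf y * gm Y y"
        using YM by (simp add: gm_scale1 gm_sym)
    qed
    also have "\<dots> = - (\<Sum>y\<in>XB. gm Y y * gm (Abb N br tt x y) U)"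
      by (simp add: cf_def sum_negf mult.commute)
    also have "(\<Sum>y\<in>XB. gm Y y * gm (Abb N br tt x y) U) = gm (\<Sum>y\<in>XB. vsc (gm Y y) (Abb N br tt x y)) U"
    proof -
      have "gm (\<Sum>y\<in>XB. vsc (gm Y y) (Abb N br tt x y)) U = (\<Sum>y\<in>XB. gm (vsc (gm Y y) (Abb N br tt x y)) U)"
        using XB_fin UM
        by (intro gm_sum1) (auto intro: scaleM Abb_M[OF x] XB_Gm)
      also have "\<dots> = (\<Sum>y\<in>XB. gm Y y * gm (Abb N br tt x y) U)"
      proof (intro sum.cong refl)
        fix y assume "y \<in> XB"
        then have "y \<in> gsp N" using XB_G by blast
        then show "gm (vsc (gm Y y) (Abb N br tt x y)) U = gm Y y * gm (Abb N br tt x y) U"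
          using UM Abb_M[OF x] by (simp add: gm_scale1)
      qed
      finally show ?thesis by simp
    qed
    also have "(\<Sum>y\<in>XB. vsc (gm Y y) (Abb N br tt x y)) = Abb N br tt x Y"
      using Abb_sum[OF x XB_fin XB_G, of "\<lambda>y. gm Y y"] onbB(1)[OF Y] by simp
    finally show ?thesis .
  qed
  then have Pw: "?P w" using wB by blast
  have uniq: "w' = w" if "?P w'" for w'
  proof -
    have d: "w' - w \<in> B" using that wB bsp_subspace V.subspace_diff by blast
    then have dM: "w' - w \<in> M" using B_M by blast
    have "gm (w' - w) (w' - w) = gm w' (w' - w) - gm w (w' - w)"
      using that wB B_M dM by (intro gm_diff1) auto
    also have "\<dots> = 0" using that Pw d by simp
    finally have "gm (w' - w) (w' - w) = 0" .
    then show ?thesis using gm_pos[OF dM] by fastforce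
  qed
  have "\<exists>!w. ?P w" using Pw uniq by blast
  from theI'[OF this] show ?thesis unfolding Abt_def .
qed

lemma hatA_eq:
  assumes U: "U \<in> tt" and V: "V \<in> tt"
  shows "hatA N br H tt gm XB U V = (\<Sum>x\<in>XB. \<Sum>y\<in>XB. gm (Abb N br tt x y) U * gm (Abb N br tt x y) V)"
  unfolding hatA_def
proof (intro sum.cong refl)
  fix x assume "x \<in> XB"
  then have x: "x \<in> gsp N" using XB_G by blast
  have a: "Abt N br H tt gm x U \<in> B" "Abt N br H tt gm x V \<in> B"
    using Abt_prop[OF x U] Abt_prop[OF x V] by auto
  show "gm (Abt N br H tt gm x U) (Abt N br H tt gm x V) = (\<Sum>y\<in>XB. gm (Abb N br tt x y) U * gm (Abb N br tt x y) V)"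
    unfolding onbB(2)[OF a]
  proof (intro sum.cong refl)
    fix y assume "y \<in> XB"
    then have "y \<in> B" using XB_B by blast
    then show "gm (Abt N br H tt gm x U) y * gm (Abt N br H tt gm x V) y = gm (Abb N br tt x y) U * gm (Abb N br tt x y) V"
      using Abt_prop[OF x U] Abt_prop[OF x V] by simp
  qed
qed

lemma normA_eq:
  "normA_sq N br tt gm XB = (\<Sum>x\<in>XB. \<Sum>y\<in>XB. \<Sum>k\<in>UB. (gm (Abb N br tt x y) k)\<^sup>2)"
  unfolding normA_sq_def
proof (intro sum.cong refl)
  fix x y assume "x \<in> XB" "y \<in> XB"
  then have "Abb N br tt x y \<in> tt" using XB_G Abb_tt by blast
  then show "gm (Abb N br tt x y) (Abb N br tt x y) = (\<Sum>k\<in>UB. (gm (Abb N br tt x y) k)\<^sup>2)"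
    using onbT(2) by (simp add: power2_eq_square)
qed

lemma checkA_eq:
  assumes X: "X \<in> XB" and Y: "Y \<in> XB"
  shows "checkA N br tt gm XB X Y = (\<Sum>x\<in>XB. \<Sum>k\<in>UB. gm (Abb N br tt X x) k * gm (Abb N br tt Y x) k)"
  unfolding checkA_def
proof (intro sum.cong refl)
  fix x assume "x \<in> XB"
  then have "Abb N br tt X x \<in> tt" "Abb N br tt Y x \<in> tt" using XB_G Abb_tt X Y by blast+
  then show "gm (Abb N br tt X x) (Abb N br tt Y x) = (\<Sum>k\<in>UB. gm (Abb N br tt X x) k * gm (Abb N br tt Y x) k)"
    using onbT(2) by simp
qed

end

lemma final_arith:
  fixes T F C :: real and n m :: nat
  assumes "0 \<le> F" "F \<le> T" "T \<le> sqrt n * F" "n \<le> m" "C = real m + 2"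
  shows "inverse C * T \<le> F \<and> F \<le> C * T"
proof -
  have C: "C > 1" using assms by simp
  have "real n \<le> (real n + 1)\<^sup>2" by (simp add: power2_eq_square algebra_simps)
  then have "sqrt n \<le> sqrt ((real n + 1)\<^sup>2)" by (rule real_sqrt_le_mono)
  then have "sqrt n \<le> real n + 1" by simp
  then have "sqrt n \<le> C" using assms by simp
  then have "T \<le> C * F" using assms(1,3) by (meson mult_right_mono order_trans)
  then have "inverse C * T \<le> F" using C by (simp add: field_simps)
  moreover have "F \<le> C * T" using assms C by (smt (verit) mult_le_cancel_right1)
  ultimately show ?thesis by simp
qed

context setting begin

lemma hat_bounds:
  "form_norm UB (hatA N br H tt gm XB) \<le> normA_sq N br tt gm XB \<and>
   normA_sq N br tt gm XB \<le> sqrt (card UB) * form_norm UB (hatA N br H tt gm XB)"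
proof -
  define c where "c i k = gm (Abb N br tt (fst i) (snd i)) k" for i :: "vec \<times> vec" and k
  have F: "form_norm UB (hatA N br H tt gm XB) = sqrt (\<Sum>j\<in>UB. \<Sum>j'\<in>UB. (\<Sum>i\<in>XB\<times>XB. c i j * c i j')\<^sup>2)"
    unfolding form_norm_def
  proof (intro arg_cong[where f=sqrt] sum.cong refl)
    fix j j' assume "j \<in> UB" "j' \<in> UB"
    then have "j \<in> tt" "j' \<in> tt" using UB_tt by blast+
    then show "(hatA N br H tt gm XB j j')\<^sup>2 = (\<Sum>i\<in>XB\<times>XB. c i j * c i j')\<^sup>2"
      by (simp add: hatA_eq c_def sum.cartesian_product')
  qed
  have T: "normA_sq N br tt gm XB = (\<Sum>i\<in>XB\<times>XB. \<Sum>j\<in>UB. (c i j)\<^sup>2)"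
    unfolding normA_eq sum.cartesian_product' by (simp add: c_def)
  show ?thesis unfolding F T using gram_upper[OF UB_fin, where c=c and I="XB\<times>XB"] gram_lower[OF UB_fin, where c=c and I="XB\<times>XB"]
    by auto
qed

lemma check_bounds:
  "form_norm XB (checkA N br tt gm XB) \<le> normA_sq N br tt gm XB \<and>
   normA_sq N br tt gm XB \<le> sqrt (card XB) * form_norm XB (checkA N br tt gm XB)"
proof -
  define c where "c i a = gm (Abb N br tt a (fst i)) (snd i)" for i :: "vec \<times> vec" and a
  have F: "form_norm XB (checkA N br tt gm XB) = sqrt (\<Sum>j\<in>XB. \<Sum>j'\<in>XB. (\<Sum>i\<in>XB\<times>UB. c i j * c i j')\<^sup>2)"
    unfolding form_norm_def
  proof (intro arg_cong[where f=sqrt] sum.cong refl)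
    fix j j' assume "j \<in> XB" "j' \<in> XB"
    then show "(checkA N br tt gm XB j j')\<^sup>2 = (\<Sum>i\<in>XB\<times>UB. c i j * c i j')\<^sup>2"
      by (simp add: checkA_eq c_def sum.cartesian_product')
  qed
  have "normA_sq N br tt gm XB = (\<Sum>j\<in>XB. \<Sum>i\<in>XB\<times>UB. (c i j)\<^sup>2)"
    unfolding normA_eq sum.cartesian_product' by (simp add: c_def)
  also have "\<dots> = (\<Sum>i\<in>XB\<times>UB. \<Sum>j\<in>XB. (c i j)\<^sup>2)" by (rule sum.swap)
  finally have T: "normA_sq N br tt gm XB = (\<Sum>i\<in>XB\<times>UB. \<Sum>j\<in>XB. (c i j)\<^sup>2)" .
  show ?thesis unfolding F T using gram_upper[OF XB_fin, where c=c and I="XB\<times>UB"] gram_lower[OF XB_fin, where c=c and I="XB\<times>UB"]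
    by auto
qed

lemma cardU: "card UB \<le> vdim M" by (rule Bs_card[OF tt_M tt_sub OU])
lemma cardX: "card XB \<le> vdim M" by (rule Bs_card[OF bsp_msp bsp_subspace OX])

end

theorem proposition4p2:
  shows "\<forall>m::nat. \<exists>C::real. C > 1 \<and>
    (\<forall>N br H tt gm XB UB.
       compact_lie_alg N br \<and> isotropy_alg N br H \<and> torus_alg N br H tt \<and>
       GT_metric N br H tt gm \<and> vdim (msp N H) = m \<and>
       onb gm (bsp N H tt) XB \<and> onb gm tt UB \<longrightarrow>
         (inverse C * normA_sq N br tt gm XB \<le> form_norm UB (hatA N br H tt gm XB) \<and>
          form_norm UB (hatA N br H tt gm XB) \<le> C * normA_sq N br tt gm XB) \<and>
         (inverse C * normA_sq N br tt gm XB \<le> form_norm XB (checkA N br tt gm XB) \<and>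
          form_norm XB (checkA N br tt gm XB) \<le> C * normA_sq N br tt gm XB))"
proof (intro allI)
  fix m :: nat
  show "\<exists>C::real. C > 1 \<and> (\<forall>N br H tt gm XB UB.
       compact_lie_alg N br \<and> isotropy_alg N br H \<and> torus_alg N br H tt \<and>
       GT_metric N br H tt gm \<and> vdim (msp N H) = m \<and>
       onb gm (bsp N H tt) XB \<and> onb gm tt UB \<longrightarrow>
         (inverse C * normA_sq N br tt gm XB \<le> form_norm UB (hatA N br H tt gm XB) \<and>
          form_norm UB (hatA N br H tt gm XB) \<le> C * normA_sq N br tt gm XB) \<and>
         (inverse C * normA_sq N br tt gm XB \<le> form_norm XB (checkA N br tt gm XB) \<and>
          form_norm XB (checkA N br tt gm XB) \<le> C * normA_sq N br tt gm XB))"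
  proof (rule exI[of _ "real m + 2"], rule conjI, simp, intro allI impI)
    fix N br H tt gm XB UB
    assume a: "compact_lie_alg N br \<and> isotropy_alg N br H \<and> torus_alg N br H tt \<and>
       GT_metric N br H tt gm \<and> vdim (msp N H) = m \<and>
       onb gm (bsp N H tt) XB \<and> onb gm tt UB"
    then interpret S: setting N br H tt gm XB UB by unfold_locales auto
    have m: "vdim (msp N H) = m" using a by simp
    have F1: "0 \<le> form_norm UB (hatA N br H tt gm XB)" by (simp add: form_norm_def sum_nonneg)
    have F2: "0 \<le> form_norm XB (checkA N br tt gm XB)" by (simp add: form_norm_def sum_nonneg)
    show "(inverse (real m + 2) * normA_sq N br tt gm XB \<le> form_norm UB (hatA N br H tt gm XB) \<and>
          form_norm UB (hatA N br H tt gm XB) \<le> (real m + 2) * normA_sq N br tt gm XB) \<and>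
         (inverse (real m + 2) * normA_sq N br tt gm XB \<le> form_norm XB (checkA N br tt gm XB) \<and>
          form_norm XB (checkA N br tt gm XB) \<le> (real m + 2) * normA_sq N br tt gm XB)"
      using final_arith[OF F1 _ _ S.cardU[unfolded m] refl] final_arith[OF F2 _ _ S.cardX[unfolded m] refl]
        S.hat_bounds S.check_bounds by blast
  qed
qed

end
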